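(* There exist absolute constants $C>0$ and $c>0$ such that the following holds for every integer $n\ge 2$. Let $f_1,\ldots,f_n\ge 0$ be arbitrary reals, not all zero, and let $\mathbf{e}_1,\ldots,\mathbf{e}_n$ be independent standard exponential random variables. Then with probability at least $1-n^{-c}$, $$\frac{\max_{i\in[n]} f_i/\mathbf{e}_i}{\sum_{i=1}^n f_i/\mathbf{e}_i}\ \ge\ \frac{1}{C\log^2 n}.$$
   Context: A standard exponential random variable $\mathbf{e}$ satisfies $\Pr[\mathbf{e}\le t]=1-e^{-t}$ for $t\ge 0$. $[n]=\{1,\ldots,n\}$. *)

theory Defs
  imports "HOL-Probability.Probability"
begin

definition exp_product :: "nat \<Rightarrow> (nat \<Rightarrow> real) measure" where
  "exp_product n = PiM {1..n} (\<lambda>_. density lborel (exponential_density 1))"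

end

theory Submission
  imports Defs
begin

abbreviation "E \<equiv> density lborel (\<lambda>x. ennreal (exponential_density 1 x))"

lemma distE: "distributed E lborel (\<lambda>x. x) (exponential_density 1)"
  unfolding distributed_def by (auto simp: distr_id2)
lemma probE: "prob_space E" by (rule prob_space_exponential_density) simp
lemma gt: "0 \<le> a \<Longrightarrow> emeasure E {x. a < x} = exp (-a)"
proof -
  assume a: "0 \<le> a"
  interpret prob_space E by (rule probE)
  have "\<P>(x in E. a < x) = exp (-a*1)" by (rule exponential_distributedD_gt[OF distE a]) simp
  thus ?thesis by (simp add: emeasure_eq_measure)
qed
lemma le0: "emeasure E {x. x \<le> 0} = 0"
proof -
  interpret prob_space E by (rule probE)
  have "\<P>(x in E. x \<le> 0) = 1 - exp (-0*1)" by (rule exponential_distributedD_le[OF distE]) simp_all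
  thus ?thesis by (simp add: emeasure_eq_measure)
qed

lemma coord1: assumes f: "0 \<le> f" and T: "0 < T"
  shows "emeasure E {x. f / x < T} \<le> ennreal (exp (- (f/T)))"
proof -
  have sub: "{x. f / x < T} \<subseteq> {x. x \<le> 0} \<union> {x. f/T < x}"
  proof
    fix x assume "x \<in> {x. f / x < T}"
    hence h: "f / x < T" by simp
    show "x \<in> {x. x \<le> 0} \<union> {x. f/T < x}"
    proof (cases "x \<le> 0")
      case False
      hence "f < T * x" using h by (simp add: divide_less_eq mult.commute)
      hence "f/T < x" using T by (simp add: divide_less_eq mult.commute)
      thus ?thesis by simp
    qed simp
  qed
  have "emeasure E {x. f / x < T} \<le> emeasure E ({x. x \<le> 0} \<union> {x. f/T < x})"
    by (rule emeasure_mono[OF sub]) simp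
  also have "\<dots> \<le> emeasure E {x. x \<le> 0} + emeasure E {x. f/T < x}"
    by (rule emeasure_subadditive) auto
  also have "\<dots> = ennreal (exp (- (f/T)))" using f T by (simp add: le0 gt)
  finally show ?thesis .
qed

lemma ptw:
  fixes r d x :: real assumes r: "0 \<le> r" and d: "0 < d" "d \<le> 1"
  shows "exponential_density 1 x * exp (min (r/x) 1) \<le>
    exponential_density 1 x + 2 * indicator {0..d} x + 2 * r * ((1/x) * indicator {d..1} x) + 2 * r * exponential_density 1 x"
proof (cases "x < 0")
  case True thus ?thesis using r d by (simp add: exponential_density_def indicator_def)
next
  case False
  define w where "w = min (r/x) 1"
  have w0: "0 \<le> w" using False r by (simp add: w_def)
  have w1: "w \<le> 1" by (simp add: w_def)
  have "exp w \<le> 1 + w + w^2" by (rule exp_bound[OF w0 w1])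
  also have "\<dots> \<le> 1 + 2*w" using w0 w1 by (simp add: power2_eq_square) (smt (verit) mult_left_le)
  finally have ew: "exp w \<le> 1 + 2*w" .
  let ?g = "exponential_density 1 x"
  have g: "?g = exp (-x)" using False by (simp add: exponential_density_def)
  have g0: "0 \<le> ?g" "?g \<le> 1" using False g by auto
  have "?g * exp w \<le> ?g * (1 + 2*w)" using ew g0 by (simp add: mult_left_mono)
  also have "\<dots> = ?g + 2 * (?g * w)" by (simp add: algebra_simps)
  also have "?g * w \<le> indicator {0..d} x + r * ((1/x) * indicator {d..1} x) + r * ?g"
  proof -
    consider "x \<le> d" | "d < x" "x \<le> 1" | "1 < x" by linarith
    thus ?thesis
    proof cases
      case 1
      have "?g * w \<le> 1" using g0 w0 w1 by (simp add: mult_le_one)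
      moreover have "0 \<le> r * ((1/x) * indicator {d..1} x) + r * ?g" using r False g0 by (simp add: indicator_def)
      ultimately show ?thesis using 1 False by (simp add: indicator_def)
    next
      case 2
      have "w \<le> r/x" by (simp add: w_def)
      hence "?g * w \<le> 1 * (r/x)" using g0 w0 by (intro mult_mono) auto
      moreover have "0 \<le> r * ?g" using r g0 by simp
      ultimately show ?thesis using 2 d by (simp add: indicator_def)
    next
      case 3
      have "w \<le> r/x" by (simp add: w_def)
      also have "r/x \<le> r" using 3 r by (simp add: divide_le_eq mult_le_cancel_left1)
      finally have "?g * w \<le> ?g * r" using g0 by (simp add: mult_left_mono)
      thus ?thesis using 3 d by (simp add: indicator_def mult.commute)
    qed
  qed
  finally show ?thesis unfolding w_def by (simp add: algebra_simps) 
qed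

lemma int_inv: assumes d: "0 < d" "d \<le> 1"
  shows "(\<integral>\<^sup>+x. ennreal ((1/x) * indicator {d..1} x) \<partial>lborel) = ennreal (- ln d)"
proof -
  have "(\<integral>\<^sup>+x. ennreal (1/x) * indicator {d..1} x \<partial>lborel) = ln 1 - ln d"
    by (rule nn_integral_FTC_Icc[where F=ln]) (use d in \<open>auto intro!: derivative_eq_intros\<close>)
  moreover have "(\<lambda>x. ennreal ((1/x) * indicator {d..1} x)) = (\<lambda>x. ennreal (1/x) * indicator {d..1} x)"
    by (auto simp: indicator_def)
  ultimately show ?thesis by simp
qed

lemma int_dens: "(\<integral>\<^sup>+x. ennreal (exponential_density 1 x) \<partial>lborel) = 1"
proof -
  interpret prob_space E by (rule prob_space_exponential_density) simp
  have "emeasure E UNIV = 1" using emeasure_space_1 by simp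
  thus ?thesis by (simp add: emeasure_density)
qed

lemma ennreal_add4: "0 \<le> a \<Longrightarrow> 0 \<le> b \<Longrightarrow> 0 \<le> c \<Longrightarrow> 0 \<le> (e::real) \<Longrightarrow>
         ennreal (a+b+c+e) = ennreal a + ennreal b + ennreal c + ennreal e"
  by (simp add: ennreal_plus[symmetric] del: ennreal_plus)

lemma int_bound:
  fixes r d :: real assumes r: "0 \<le> r" and d: "0 < d" "d \<le> 1"
  shows "(\<integral>\<^sup>+x. ennreal (exp (min (r/x) 1)) \<partial>E) \<le> ennreal (1 + 2*d + 2*r*(- ln d) + 2*r)"
proof -
  let ?g = "\<lambda>x. exponential_density 1 x"
  have g0: "\<And>x. 0 \<le> ?g x" by (simp add: exponential_density_nonneg)
  have "(\<integral>\<^sup>+x. ennreal (exp (min (r/x) 1)) \<partial>E) = (\<integral>\<^sup>+x. ennreal (?g x) * ennreal (exp (min (r/x) 1)) \<partial>lborel)"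
    by (subst nn_integral_density) auto
  also have "\<dots> \<le> (\<integral>\<^sup>+x. ennreal (?g x) + 2 * indicator {0..d} x + ennreal (2*r) * ennreal ((1/x) * indicator {d..1} x) + ennreal (2*r) * ennreal (?g x) \<partial>lborel)"
  proof (rule nn_integral_mono)
    fix x
    have h: "0 \<le> (1/x) * indicator {d..1} x" using d by (auto simp: indicator_def)
    have "ennreal (?g x) * ennreal (exp (min (r/x) 1)) = ennreal (?g x * exp (min (r/x) 1))"
      using g0 by (simp add: ennreal_mult)
    also have "\<dots> \<le> ennreal (?g x + 2 * indicator {0..d} x + 2 * r * ((1/x) * indicator {d..1} x) + 2 * r * ?g x)"
      by (rule ennreal_leI[OF ptw[OF r d]])
    also have "\<dots> = ennreal (?g x) + 2 * indicator {0..d} x + ennreal (2*r) * ennreal ((1/x) * indicator {d..1} x) + ennreal (2*r) * ennreal (?g x)"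
    proof -
      have i: "ennreal (2 * indicator {0..d} x) = 2 * indicator {0..d} x" by (simp add: indicator_def)
      have p: "\<And>a b c e::real. 0 \<le> a \<Longrightarrow> 0 \<le> b \<Longrightarrow> 0 \<le> c \<Longrightarrow> 0 \<le> e \<Longrightarrow>
         ennreal (a+b+c+e) = ennreal a + ennreal b + ennreal c + ennreal e"
        by (simp add: ennreal_plus[symmetric] del: ennreal_plus)
      have "ennreal (?g x + 2 * indicator {0..d} x + 2 * r * ((1/x) * indicator {d..1} x) + 2 * r * ?g x)
        = ennreal (?g x) + ennreal (2 * indicator {0..d} x) + ennreal (2 * r * ((1/x) * indicator {d..1} x)) + ennreal (2 * r * ?g x)"
      proof -
        have h2: "0 \<le> 2 * r * ((1/x) * indicator {d..1} x)" by (rule mult_nonneg_nonneg) (use r h in auto)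
        have h3: "0 \<le> 2 * r * ?g x" by (rule mult_nonneg_nonneg) (use r g0 in auto)
        have h4: "0 \<le> 2 * (indicator {0..d} x :: real)" by simp
        show ?thesis by (rule p[OF g0 h4 h2 h3])
      qed
      moreover have "ennreal (2 * r * ((1/x) * indicator {d..1} x)) = ennreal (2*r) * ennreal ((1/x) * indicator {d..1} x)"
        by (rule ennreal_mult) (use r h in auto)
      moreover have "ennreal (2 * r * ?g x) = ennreal (2*r) * ennreal (?g x)"
        by (rule ennreal_mult) (use r g0[of x] in auto)
      ultimately show ?thesis by (simp only: i)
    qed
    finally show "ennreal (?g x) * ennreal (exp (min (r/x) 1)) \<le> ennreal (?g x) + 2 * indicator {0..d} x + ennreal (2*r) * ennreal ((1/x) * indicator {d..1} x) + ennreal (2*r) * ennreal (?g x)" .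
  qed
  also have "\<dots> = (\<integral>\<^sup>+x. ennreal (?g x) \<partial>lborel) + 2 * (\<integral>\<^sup>+x. indicator {0..d} x \<partial>lborel)
      + ennreal (2*r) * (\<integral>\<^sup>+x. ennreal ((1/x) * indicator {d..1} x) \<partial>lborel) + ennreal (2*r) * (\<integral>\<^sup>+x. ennreal (?g x) \<partial>lborel)"
    by (simp add: nn_integral_add nn_integral_cmult)
  also have "\<dots> = 1 + 2 * ennreal d + ennreal (2*r) * ennreal (- ln d) + ennreal (2*r)"
  proof -
    have h2: "(\<integral>\<^sup>+x. indicator {0..d} x \<partial>lborel) = ennreal d" using d by simp
    show ?thesis by (simp only: h2 int_dens int_inv[OF d] mult_1_right)
  qed
  also have "\<dots> = ennreal (1 + 2*d + 2*r*(- ln d) + 2*r)"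
  proof -
    have l: "0 \<le> - ln d" using d by simp
    have "ennreal (1 + 2*d + 2*r*(- ln d) + 2*r) = ennreal 1 + ennreal (2*d) + ennreal (2*r*(- ln d)) + ennreal (2*r)"
      by (rule ennreal_add4) (use d r l in \<open>auto intro: mult_nonneg_nonpos\<close>)
    moreover have "ennreal (2*r*(- ln d)) = ennreal (2*r) * ennreal (- ln d)"
      by (rule ennreal_mult) (use r l in auto)
    moreover have "ennreal (2*d) = 2 * ennreal d" using d by (simp add: ennreal_mult)
    ultimately show ?thesis by simp
  qed
  finally show ?thesis .
qed


lemma ennreal_prod_mono: "(\<And>i. i\<in>A \<Longrightarrow> (f i::ennreal) \<le> g i) \<Longrightarrow> prod f A \<le> prod g A"
proof (induction A rule: infinite_finite_induct)
  case (insert x F)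
  thus ?case by (simp add: mult_mono)
qed auto

theorem lemma2p1:
  shows "\<exists>C::real. \<exists>c::real. C > 0 \<and> c > 0 \<and>
    (\<forall>(n::nat) (f::nat \<Rightarrow> real).
       n \<ge> 2 \<longrightarrow> (\<forall>i\<in>{1..n}. f i \<ge> 0) \<longrightarrow> (\<exists>i\<in>{1..n}. f i \<noteq> 0) \<longrightarrow>
       measure (exp_product n)
         {\<omega> \<in> space (exp_product n).
            (Max ((\<lambda>i. f i / \<omega> i) ` {1..n})) / (\<Sum>i=1..n. f i / \<omega> i)
              \<ge> 1 / (C * (ln (real n))\<^sup>2)}
       \<ge> 1 - real n powr (- c))"
proof (rule exI[of _ 20], rule exI[of _ 1], intro conjI allI impI)
  show "(0::real) < 20" by simp
  show "(0::real) < 1" by simp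
  fix n :: nat and f :: "nat \<Rightarrow> real"
  assume n2: "2 \<le> n" and fnn: "\<forall>i\<in>{1..n}. 0 \<le> f i" and fnz: "\<exists>i\<in>{1..n}. f i \<noteq> 0"
  define I where "I = {1..n}"
  have fI: "finite I" by (simp add: I_def)
  have ps: "prob_space E" by (rule probE)
  interpret PP: product_prob_space "\<lambda>_. E" I
    by (simp add: product_prob_space_def product_prob_space_axioms_def product_sigma_finite_def ps prob_space_imp_sigma_finite)
  define M where "M = exp_product n"
  have M: "M = PiM I (\<lambda>_. E)" by (simp add: M_def exp_product_def I_def)
  interpret MP: prob_space M unfolding M by (rule prob_space_PiM) (rule ps)
  have spM: "space M = PiE I (\<lambda>_. UNIV)" by (simp add: M space_PiM)
  have f0: "\<And>i. i \<in> I \<Longrightarrow> 0 \<le> f i" using fnn by (simp add: I_def)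
  define S where "S = (\<Sum>i\<in>I. f i)"
  have S: "0 < S" unfolding S_def using fnz f0 fI
    by (metis I_def order_le_less sum_pos2)
  define L where "L = ln (real n)"
  have L: "2/3 \<le> L"
  proof -
    have "ln 2 \<le> ln (real n)" using n2 by simp
    thus ?thesis using ln2_ge_two_thirds by (simp add: L_def)
  qed
  define T where "T = S / (2*L)"
  have T: "0 < T" using S L by (simp add: T_def)
  define r where "r i = f i / T" for i
  have r0: "\<And>i. i \<in> I \<Longrightarrow> 0 \<le> r i" using f0 T by (simp add: r_def)
  have sr: "(\<Sum>i\<in>I. r i) = 2*L"
  proof -
    have "(\<Sum>i\<in>I. r i) = S / T" by (simp add: r_def S_def sum_divide_distrib)
    thus ?thesis using S L by (simp add: T_def)
  qed
  define a where "a = 20 * L^2"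
  have a: "0 < a" using L by (simp add: a_def)
  have npow: "exp (- (2*L)) = real n powr (-2)" using n2 by (simp add: powr_def L_def)
  define B0 where "B0 = {\<omega>\<in>space M. \<exists>i\<in>I. \<omega> i \<le> 0}"
  define B1 where "B1 = {\<omega>\<in>space M. \<forall>i\<in>I. f i / \<omega> i < T}"
  define W where "W \<omega> = (\<Sum>i\<in>I. min (r i / \<omega> i) 1)" for \<omega> :: "nat \<Rightarrow> real"
  define B2 where "B2 = {\<omega>\<in>space M. a < W \<omega>}"
  define G where "G = {\<omega> \<in> space M.
            (Max ((\<lambda>i. f i / \<omega> i) ` I)) / (\<Sum>i\<in>I. f i / \<omega> i) \<ge> 1 / (20 * L\<^sup>2)}"
  have mW: "W \<in> borel_measurable M" unfolding W_def M by measurable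
  have mB0: "B0 \<in> sets M" unfolding B0_def M using fI by measurable
  have mB1: "B1 \<in> sets M" unfolding B1_def M using fI by measurable
  have mB2: "B2 \<in> sets M" unfolding B2_def using mW by measurable
  have mG: "G \<in> sets M" unfolding G_def M using fI by measurable
  have eB0: "emeasure M B0 = 0"
  proof -
    have "B0 = (\<Union>i\<in>I. {\<omega>\<in>space M. \<omega> i \<in> {x. x \<le> 0}})" by (auto simp: B0_def)
    moreover have "{\<omega>\<in>space M. \<omega> i \<in> {x. x \<le> 0}} \<in> sets M" if "i \<in> I" for i
      unfolding M using that by measurable
    ultimately have "emeasure M B0 \<le> (\<Sum>i\<in>I. emeasure M {\<omega>\<in>space M. \<omega> i \<in> {x. x \<le> 0}})"
      using fI by (simp add: emeasure_subadditive_finite image_subset_iff)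
    also have "\<dots> = 0"
    proof (rule sum.neutral, intro ballI)
      fix i assume i: "i \<in> I"
      have "emeasure (PiM I (\<lambda>_. E)) {\<omega>\<in>space (PiM I (\<lambda>_. E)). \<omega> i \<in> {x. x\<le>0}} = emeasure E {x. x\<le>0}"
        by (rule PP.emeasure_PiM_Collect_single) (use i in auto)
      thus "emeasure M {\<omega>\<in>space M. \<omega> i \<in> {x. x \<le> 0}} = 0" using le0 by (simp only: M)
    qed
    finally show ?thesis by simp
  qed
  have eB1: "emeasure M B1 \<le> ennreal (real n powr (-2))"
  proof -
    have "B1 = PiE I (\<lambda>i. {x. f i / x < T})" by (auto simp: B1_def spM)
    hence "emeasure M B1 = (\<Prod>i\<in>I. emeasure E {x. f i / x < T})"
      using fI by (simp add: M PP.emeasure_PiM)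
    also have "\<dots> \<le> (\<Prod>i\<in>I. ennreal (exp (- r i)))"
      by (rule ennreal_prod_mono) (simp add: r_def coord1 f0 T)
    also have "\<dots> = ennreal (\<Prod>i\<in>I. exp (- r i))" by (simp add: prod_ennreal)
    also have "(\<Prod>i\<in>I. exp (- r i)) = exp (- (\<Sum>i\<in>I. r i))"
      using fI by (simp add: exp_sum sum_negf[symmetric])
    finally show ?thesis by (simp add: sr npow)
  qed
  have eB2: "emeasure M B2 \<le> ennreal (real n powr (-2))"
  proof -
    define d where "d = 1 / real n"
    have d: "0 < d" "d \<le> 1" using n2 by (auto simp: d_def)
    have lnd: "- ln d = L" using n2 by (simp add: d_def L_def ln_div)
    have cI: "card I = n" by (simp add: I_def)
    have "(\<integral>\<^sup>+\<omega>. (\<Prod>i\<in>I. ennreal (exp (min (r i / \<omega> i) 1))) \<partial>M) = (\<Prod>i\<in>I. \<integral>\<^sup>+x. ennreal (exp (min (r i / x) 1)) \<partial>E)"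
      unfolding M by (rule PP.product_nn_integral_prod[OF fI, where f="\<lambda>i x. ennreal (exp (min (r i / x) 1))"]) measurable
    also have "\<dots> \<le> (\<Prod>i\<in>I. ennreal (1 + 2*d + 2*r i*(- ln d) + 2*r i))"
      by (rule ennreal_prod_mono) (rule int_bound[OF r0 d], simp)
    also have "\<dots> \<le> (\<Prod>i\<in>I. ennreal (exp (2*d + 2*r i*(- ln d) + 2*r i)))"
    proof (rule ennreal_prod_mono, rule ennreal_leI)
      fix i
      show "1 + 2*d + 2*r i*(- ln d) + 2*r i \<le> exp (2*d + 2*r i*(- ln d) + 2*r i)"
        using exp_ge_add_one_self[of "2*d + 2*r i*(- ln d) + 2*r i"] by linarith
    qed
    also have "\<dots> = ennreal (exp (\<Sum>i\<in>I. 2*d + 2*r i*(- ln d) + 2*r i))"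
      using fI by (simp add: prod_ennreal exp_sum)
    also have "(\<Sum>i\<in>I. 2*d + 2*r i*(- ln d) + 2*r i) = 2 * (real n * d) + (2*(- ln d) + 2) * (\<Sum>i\<in>I. r i)"
    proof -
      have "(\<Sum>i\<in>I. 2*d + 2*r i*(- ln d) + 2*r i) = (\<Sum>i\<in>I. 2*d + (2*(- ln d) + 2) * r i)"
        by (rule sum.cong) (simp_all add: algebra_simps)
      also have "\<dots> = (\<Sum>i\<in>I. 2*d) + (2*(- ln d) + 2) * (\<Sum>i\<in>I. r i)"
        by (simp only: sum.distrib sum_distrib_left)
      also have "(\<Sum>i\<in>I. 2*d) = 2 * (real n * d)" by (simp add: cI)
      finally show ?thesis .
    qed
    also have "\<dots> = 2 + 4*L^2 + 4*L"
    proof -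
      have nd: "real n * d = 1" using n2 by (simp add: d_def)
      show ?thesis by (simp only: nd sr lnd) (simp add: power2_eq_square algebra_simps)
    qed
    finally have PB: "(\<integral>\<^sup>+\<omega>. (\<Prod>i\<in>I. ennreal (exp (min (r i / \<omega> i) 1))) \<partial>M) \<le> ennreal (exp (2 + 4*L^2 + 4*L))" .
    have "emeasure M B2 = (\<integral>\<^sup>+\<omega>. indicator B2 \<omega> \<partial>M)" using mB2 by simp
    also have "\<dots> \<le> (\<integral>\<^sup>+\<omega>. ennreal (exp (-a)) * (\<Prod>i\<in>I. ennreal (exp (min (r i / \<omega> i) 1))) \<partial>M)"
    proof (rule nn_integral_mono)
      fix \<omega> :: "nat \<Rightarrow> real"
      have "(\<Prod>i\<in>I. ennreal (exp (min (r i / \<omega> i) 1))) = ennreal (exp (W \<omega>))"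
        using fI by (simp add: prod_ennreal W_def exp_sum)
      hence e: "ennreal (exp (-a)) * (\<Prod>i\<in>I. ennreal (exp (min (r i / \<omega> i) 1))) = ennreal (exp (W \<omega> - a))"
        by (simp add: ennreal_mult[symmetric] exp_diff exp_minus field_simps)
      show "indicator B2 \<omega> \<le> ennreal (exp (-a)) * (\<Prod>i\<in>I. ennreal (exp (min (r i / \<omega> i) 1)))"
      proof (cases "\<omega> \<in> B2")
        case True
        hence "a < W \<omega>" by (simp add: B2_def)
        hence "1 \<le> exp (W \<omega> - a)" by simp
        thus ?thesis using True by (simp add: e)
      qed simp
    qed
    also have "\<dots> = ennreal (exp (-a)) * (\<integral>\<^sup>+\<omega>. (\<Prod>i\<in>I. ennreal (exp (min (r i / \<omega> i) 1))) \<partial>M)"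
      by (rule nn_integral_cmult) (use fI in \<open>unfold M, measurable\<close>)
    also have "\<dots> \<le> ennreal (exp (-a)) * ennreal (exp (2 + 4*L^2 + 4*L))"
      by (rule mult_left_mono[OF PB]) simp
    also have "ennreal (exp (-a)) * ennreal (exp (2 + 4*L^2 + 4*L)) = ennreal (exp (-a + (2 + 4*L^2 + 4*L)))"
      by (simp add: ennreal_mult[symmetric] exp_add[symmetric])
    also have "\<dots> \<le> ennreal (exp (- (2*L)))"
    proof (rule ennreal_leI)
      have "16*L^2 - 6*L - 2 = (L - 2/3)*(16*L + 14/3) + 10/9" by (simp add: power2_eq_square field_simps)
      moreover have "0 \<le> (L - 2/3)*(16*L + 14/3)" using L by simp
      ultimately have "-a + (2 + 4*L^2 + 4*L) \<le> - (2*L)" by (simp add: a_def)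
      thus "exp (-a + (2 + 4*L^2 + 4*L)) \<le> exp (- (2*L))" by simp
    qed
    finally show ?thesis by (simp add: npow)
  qed
  have incl: "space M - (B0 \<union> B1 \<union> B2) \<subseteq> G"
  proof
    fix \<omega> assume w: "\<omega> \<in> space M - (B0 \<union> B1 \<union> B2)"
    have sp: "\<omega> \<in> space M" using w by simp
    have pos: "\<And>i. i \<in> I \<Longrightarrow> 0 < \<omega> i" using w by (auto simp: B0_def not_le)
    obtain j where j: "j \<in> I" "T \<le> f j / \<omega> j" using w by (auto simp: B1_def not_less)
    have Wa: "W \<omega> \<le> a" using w by (auto simp: B2_def not_less)
    define X where "X i = f i / \<omega> i" for i
    have X0: "\<And>i. i \<in> I \<Longrightarrow> 0 \<le> X i" using pos f0 by (simp add: X_def less_imp_le)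
    define Mx where "Mx = Max (X ` I)"
    have MxX: "\<And>i. i \<in> I \<Longrightarrow> X i \<le> Mx" using fI by (simp add: Mx_def)
    have MxT: "T \<le> Mx" using MxX[OF j(1)] j(2) by (simp add: X_def)
    have Mx0: "0 < Mx" using MxT T by simp
    have each: "X i \<le> Mx * min (r i / \<omega> i) 1" if i: "i \<in> I" for i
    proof -
      have ri: "r i / \<omega> i = X i / T" by (simp add: r_def X_def)
      show ?thesis
      proof (cases "X i / T \<le> 1")
        case True
        have "X i = T * (X i / T)" using T by simp
        also have "\<dots> \<le> Mx * (X i / T)" using MxT X0[OF i] T by (intro mult_right_mono) auto
        finally show ?thesis using True by (simp add: ri)
      next
        case False
        thus ?thesis using MxX[OF i] by (simp add: ri)
      qed
    qed
    have "(\<Sum>i\<in>I. X i) \<le> (\<Sum>i\<in>I. Mx * min (r i / \<omega> i) 1)" by (rule sum_mono) (rule each)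
    also have "\<dots> = Mx * W \<omega>" by (simp add: W_def sum_distrib_left)
    also have "\<dots> \<le> Mx * a" using Wa Mx0 by simp
    finally have sumle: "(\<Sum>i\<in>I. X i) \<le> Mx * a" .
    have "X j \<le> (\<Sum>i\<in>I. X i)" by (rule member_le_sum[OF j(1)]) (use X0 fI in auto)
    hence sum0: "0 < (\<Sum>i\<in>I. X i)" using j(2) T by (simp add: X_def)
    have "1 / a = Mx / (Mx * a)" using Mx0 by simp
    also have "\<dots> \<le> Mx / (\<Sum>i\<in>I. X i)"
      by (rule divide_left_mono[OF sumle]) (use Mx0 sum0 a in auto)
    finally have "1 / a \<le> Mx / (\<Sum>i\<in>I. X i)" .
    thus "\<omega> \<in> G" using sp by (simp add: G_def a_def Mx_def X_def)
  qed
  have mb: "\<And>B x. emeasure M B \<le> ennreal x \<Longrightarrow> 0 \<le> x \<Longrightarrow> measure M B \<le> x"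
    by (simp add: MP.emeasure_eq_measure)
  have "measure M (space M - (B0 \<union> B1 \<union> B2)) \<le> measure M G"
    by (rule MP.finite_measure_mono[OF incl mG])
  moreover have "measure M (space M - (B0 \<union> B1 \<union> B2)) = 1 - measure M (B0 \<union> B1 \<union> B2)"
    using mB0 mB1 mB2 by (simp add: MP.prob_compl)
  moreover have "measure M (B0 \<union> B1 \<union> B2) \<le> measure M B0 + measure M B1 + measure M B2"
  proof -
    have "measure M (B0 \<union> B1 \<union> B2) \<le> measure M (B0 \<union> B1) + measure M B2"
      using mB0 mB1 mB2 by (intro measure_Un_le) auto
    moreover have "measure M (B0 \<union> B1) \<le> measure M B0 + measure M B1"
      using mB0 mB1 by (intro measure_Un_le) auto
    ultimately show ?thesis by linarith
  qed
  moreover have "measure M B0 \<le> 0" using eB0 by (intro mb) auto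
  moreover have "measure M B1 \<le> real n powr (-2)" using eB1 by (intro mb) auto
  moreover have "measure M B2 \<le> real n powr (-2)" using eB2 by (intro mb) auto
  moreover have "2 * real n powr (-2) \<le> real n powr (-1)"
  proof -
    have n0: "0 < real n" using n2 by simp
    have a1: "real n powr (-2) = inverse ((real n)^2)"
      using n0 by (simp only: powr_minus powr_numeral)
    have a2: "real n powr (-1) = inverse (real n)"
      using n0 by (simp only: powr_minus powr_one_gt_zero_iff powr_one)
    have n2r: "2 \<le> real n" using n2 by simp
    have "2 * inverse ((real n)^2) = (2 / real n) * inverse (real n)" by (simp add: power2_eq_square field_simps)
    also have "\<dots> \<le> 1 * inverse (real n)" using n0 n2r by (intro mult_right_mono) (simp_all add: divide_le_eq)
    finally have "2 * inverse ((real n)^2) \<le> inverse (real n)" by simp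
    thus ?thesis by (simp only: a1 a2)
  qed
  ultimately have final: "1 - real n powr (-1) \<le> measure M G" by linarith
  have GG: "G = {\<omega> \<in> space (exp_product n).
            (Max ((\<lambda>i. f i / \<omega> i) ` {1..n})) / (\<Sum>i=1..n. f i / \<omega> i)
              \<ge> 1 / (20 * (ln (real n))\<^sup>2)}" by (simp add: G_def M_def I_def L_def)
  show "1 - real n powr (- 1) \<le> measure (exp_product n)
         {\<omega> \<in> space (exp_product n).
            (Max ((\<lambda>i. f i / \<omega> i) ` {1..n})) / (\<Sum>i=1..n. f i / \<omega> i)
              \<ge> 1 / (20 * (ln (real n))\<^sup>2)}" using final unfolding GG M_def .
qed
end
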